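(* For every $n\ge4$, the poset $(\mathcal{G}_{\mathsf{cwvg}}(n),\preceq_{\mathsf{MWC}})$ is not a tree; that is, there is a game in $\mathcal{G}_{\mathsf{cwvg}}(n)$ that covers at least two distinct games in this poset.
   Context: Let $N=\{1,\dots,n\}$. A simple game is a function $v:2^N\to\{0,1\}$ (all-losing allowed); a minimal winning coalition is a winning coalition $S$ with $S\setminus\{i\}$ losing for all $i\in S$; $W_{\min,G}$ denotes the set of minimal winning coalitions of $G$. A weighted voting game is a simple game with $q\ge0$, $w_i\ge0$ and $v(S)=1\iff\sum_{i\in S}w_i\ge q$. Write $i\succeq j$ if $v(S\cup\{i\})\ge v(S\cup\{j\})$ for all $S\subseteq N\setminus\{i,j\}$. $\mathcal{G}_{\mathsf{cwvg}}(n)$ is the set of weighted voting games on $N$ with $1\succeq2\succeq\cdots\succeq n$. For $G,G'\in\mathcal{G}_{\mathsf{cwvg}}(n)$, $G\preceq_{\mathsf{MWC}}G'$ iff there is a sequence $G=G_1,\dots,G_k=G'$ ($k\ge1$) in $\mathcal{G}_{\mathsf{cwvg}}(n)$ with $W_{\min,G_i}\subset W_{\min,G_{i+1}}$ and $|W_{\min,G_{i+1}}|=|W_{\min,G_i}|+1$ for all $i<k$. $y$ covers $x$ if $x\preceq y$, $x\ne y$ and no $z\notin\{x,y\}$ satisfies $x\preceq z\preceq y$. The poset (which has a least element) is called a tree if its Hasse diagram is a tree, i.e., every element covers at most one element. *)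

theory Defs
  imports Main Complex_Main
begin

text \<open>A simple game on N = {1..n} is represented by its set of winning coalitions
  (subsets of {1..n}); v(S) = 1 iff S is in the set.\<close>

definition players :: "nat \<Rightarrow> nat set" where
  "players n = {1..n}"

definition weighted_voting_game :: "nat \<Rightarrow> nat set set \<Rightarrow> bool" where
  "weighted_voting_game n G \<longleftrightarrow>
     (\<exists>(q::real) (w::nat \<Rightarrow> real). q \<ge> 0 \<and> (\<forall>i \<in> players n. w i \<ge> 0) \<and>
        G = {S. S \<subseteq> players n \<and> (\<Sum>i\<in>S. w i) \<ge> q})"

definition desir_ge :: "nat \<Rightarrow> nat set set \<Rightarrow> nat \<Rightarrow> nat \<Rightarrow> bool" where
  "desir_ge n G i j \<longleftrightarrow>
     (\<forall>S. S \<subseteq> players n - {i, j} \<longrightarrow> (S \<union> {j} \<in> G \<longrightarrow> S \<union> {i} \<in> G))"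

definition cwvg :: "nat \<Rightarrow> nat set set set" where
  "cwvg n = {G. weighted_voting_game n G \<and> (\<forall>i. 1 \<le> i \<and> i < n \<longrightarrow> desir_ge n G i (i + 1))}"

definition Wmin :: "nat set set \<Rightarrow> nat set set" where
  "Wmin G = {S \<in> G. \<forall>i \<in> S. S - {i} \<notin> G}"

definition mwc_step :: "nat \<Rightarrow> nat set set \<Rightarrow> nat set set \<Rightarrow> bool" where
  "mwc_step n G H \<longleftrightarrow> G \<in> cwvg n \<and> H \<in> cwvg n \<and> Wmin G \<subset> Wmin H
     \<and> card (Wmin H) = card (Wmin G) + 1"

definition mwc_le :: "nat \<Rightarrow> nat set set \<Rightarrow> nat set set \<Rightarrow> bool" where
  "mwc_le n G G' \<longleftrightarrow> G \<in> cwvg n \<and> G' \<in> cwvg n \<and> (mwc_step n)\<^sup>*\<^sup>* G G'"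

definition covers :: "nat \<Rightarrow> nat set set \<Rightarrow> nat set set \<Rightarrow> bool" where
  "covers n y x \<longleftrightarrow> mwc_le n x y \<and> x \<noteq> y \<and>
     \<not> (\<exists>z. z \<noteq> x \<and> z \<noteq> y \<and> mwc_le n x z \<and> mwc_le n z y)"

end

theory Submission
  imports Defs
begin

definition wg :: "nat \<Rightarrow> (nat \<Rightarrow> real) \<Rightarrow> real \<Rightarrow> nat set set" where
  "wg n w q = {S. S \<subseteq> players n \<and> (\<Sum>i\<in>S. w i) \<ge> q}"

lemma wg_cwvg:
  assumes "q \<ge> 0" "\<And>i. w i \<ge> 0" "\<And>i. 1 \<le> i \<Longrightarrow> w (i+1) \<le> w i"
  shows "wg n w q \<in> cwvg n"
  unfolding cwvg_def
proof (intro CollectI conjI allI impI)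
  show "weighted_voting_game n (wg n w q)"
    unfolding weighted_voting_game_def wg_def
    by (intro exI[of _ q] exI[of _ w]) (simp add: assms(1,2))
  fix i assume i: "1 \<le> i \<and> i < n"
  show "desir_ge n (wg n w q) i (i + 1)"
    unfolding desir_ge_def
  proof (intro allI impI)
    fix S assume S: "S \<subseteq> players n - {i, i + 1}" and W: "S \<union> {i + 1} \<in> wg n w q"
    have Sp: "S \<subseteq> players n" using S by blast
    have "finite (players n)" by (simp add: players_def)
    then have fin: "finite S" using Sp by (rule finite_subset[rotated])
    have niS: "i \<notin> S" "i+1 \<notin> S" using S by auto
    have e1: "sum w (S \<union> {i+1}) = sum w S + w (i+1)" using fin niS by simp
    have e2: "sum w (S \<union> {i}) = sum w S + w i" using fin niS by simp
    have "q \<le> sum w (S \<union> {i+1})" using W by (simp add: wg_def)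
    also have "\<dots> \<le> sum w (S \<union> {i})" using e1 e2 assms(3)[of i] i by simp
    finally have q: "q \<le> sum w (S \<union> {i})" .
    have "i \<in> players n" using i unfolding players_def by simp
    then have "S \<union> {i} \<subseteq> players n" using Sp by blast
    then show "S \<union> {i} \<in> wg n w q" using q by (simp add: wg_def)
  qed
qed

lemma sum4:
  fixes w :: "nat \<Rightarrow> real"
  assumes "finite S" "\<And>i. i \<notin> {1,2,3,4} \<Longrightarrow> w i = (0::real)"
  shows "sum w S = (if 1\<in>S then w 1 else 0) + (if 2\<in>S then w 2 else 0) + (if 3\<in>S then w 3 else 0) + (if 4\<in>S then w 4 else 0)"
proof -
  have "sum w S = sum w (S \<inter> {1,2,3,4})"
    by (rule sum.mono_neutral_right) (use assms in auto)
  also have "\<dots> = sum w ({1,2,3,4} \<inter> S)" by (simp add: Int_commute)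
  also have "\<dots> = (\<Sum>i\<in>{1,2,3,4}. if i \<in> S then w i else 0)"
    by (rule sum.inter_restrict) simp
  also have "\<dots> = (if 1\<in>S then w 1 else 0) + (if 2\<in>S then w 2 else 0) + (if 3\<in>S then w 3 else 0) + (if 4\<in>S then w 4 else 0)"
    by simp
  finally show ?thesis .
qed

lemma Wmin_char:
  assumes "n \<ge> 4" "\<And>S j. j \<notin> {1,2,3,4} \<Longrightarrow> P (S - {j}) = P S"
  shows "Wmin {S. S \<subseteq> players n \<and> P S} = {S. S \<subseteq> {1,2,3,4} \<and> P S \<and> (\<forall>i\<in>S. \<not> P (S - {i}))}"
proof
  show "Wmin {S. S \<subseteq> players n \<and> P S} \<subseteq> {S. S \<subseteq> {1,2,3,4} \<and> P S \<and> (\<forall>i\<in>S. \<not> P (S - {i}))}"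
  proof
    fix S assume S: "S \<in> Wmin {S. S \<subseteq> players n \<and> P S}"
    have "S \<subseteq> {1,2,3,4}"
    proof
      fix j assume j: "j \<in> S"
      show "j \<in> {1,2,3,4}"
      proof (rule ccontr)
        assume "j \<notin> {1,2,3,4}"
        then have "P (S - {j})" using S assms(2) unfolding Wmin_def by auto
        then show False using S j unfolding Wmin_def by auto
      qed
    qed
    then show "S \<in> {S. S \<subseteq> {1,2,3,4} \<and> P S \<and> (\<forall>i\<in>S. \<not> P (S - {i}))}"
      using S unfolding Wmin_def by auto
  qed
  show "{S. S \<subseteq> {1,2,3,4} \<and> P S \<and> (\<forall>i\<in>S. \<not> P (S - {i}))} \<subseteq> Wmin {S. S \<subseteq> players n \<and> P S}"
  proof
    fix S assume S: "S \<in> {S. S \<subseteq> {1,2,3,4} \<and> P S \<and> (\<forall>i\<in>S. \<not> P (S - {i}))}"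
    have "{1,2,3,4} \<subseteq> players n" using assms(1) unfolding players_def by auto
    then show "S \<in> Wmin {S. S \<subseteq> players n \<and> P S}" using S unfolding Wmin_def by auto
  qed
qed

lemma det4: "S \<subseteq> {1,2,3,4::nat} \<Longrightarrow> S = (if 1\<in>S then {1} else {}) \<union> (if 2\<in>S then {2} else {}) \<union> (if 3\<in>S then {3} else {}) \<union> (if 4\<in>S then {4} else {})"
  by auto

lemma filt:
  fixes Q :: "bool \<Rightarrow> bool \<Rightarrow> bool \<Rightarrow> bool \<Rightarrow> bool"
  assumes "\<And>S. S \<in> R \<Longrightarrow> S \<subseteq> {1,2,3,4} \<and> Q (1\<in>S) (2\<in>S) (3\<in>S) (4\<in>S) \<and> (\<forall>i\<in>S. \<not> Q (1\<in>S-{i}) (2\<in>S-{i}) (3\<in>S-{i}) (4\<in>S-{i}))"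
  and "\<And>a b c d. Q a b c d \<Longrightarrow> (\<not> a \<or> \<not> Q False b c d) \<Longrightarrow> (\<not> b \<or> \<not> Q a False c d) \<Longrightarrow> (\<not> c \<or> \<not> Q a b False d) \<Longrightarrow> (\<not> d \<or> \<not> Q a b c False) \<Longrightarrow>
      (if a then {1} else {}) \<union> (if b then {2} else {}) \<union> (if c then {3} else {}) \<union> (if d then {4::nat} else {}) \<in> R"
  shows "{S. S \<subseteq> {1,2,3,4::nat} \<and> Q (1\<in>S) (2\<in>S) (3\<in>S) (4\<in>S) \<and> (\<forall>i\<in>S. \<not> Q (1\<in>S-{i}) (2\<in>S-{i}) (3\<in>S-{i}) (4\<in>S-{i}))} = R"
proof
  show "R \<subseteq> {S. S \<subseteq> {1,2,3,4::nat} \<and> Q (1\<in>S) (2\<in>S) (3\<in>S) (4\<in>S) \<and> (\<forall>i\<in>S. \<not> Q (1\<in>S-{i}) (2\<in>S-{i}) (3\<in>S-{i}) (4\<in>S-{i}))}" using assms(1) by blast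
  show "{S. S \<subseteq> {1,2,3,4::nat} \<and> Q (1\<in>S) (2\<in>S) (3\<in>S) (4\<in>S) \<and> (\<forall>i\<in>S. \<not> Q (1\<in>S-{i}) (2\<in>S-{i}) (3\<in>S-{i}) (4\<in>S-{i}))} \<subseteq> R"
  proof
    fix S assume S: "S \<in> {S. S \<subseteq> {1,2,3,4::nat} \<and> Q (1\<in>S) (2\<in>S) (3\<in>S) (4\<in>S) \<and> (\<forall>i\<in>S. \<not> Q (1\<in>S-{i}) (2\<in>S-{i}) (3\<in>S-{i}) (4\<in>S-{i}))}"
    then have s: "S \<subseteq> {1,2,3,4}" and q: "Q (1\<in>S) (2\<in>S) (3\<in>S) (4\<in>S)"
      and M: "\<forall>i\<in>S. \<not> Q (1\<in>S-{i}) (2\<in>S-{i}) (3\<in>S-{i}) (4\<in>S-{i})" by auto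
    have m1: "\<not> 1\<in>S \<or> \<not> Q False (2\<in>S) (3\<in>S) (4\<in>S)" using M[rule_format, of 1] by auto
    have m2: "\<not> 2\<in>S \<or> \<not> Q (1\<in>S) False (3\<in>S) (4\<in>S)" using M[rule_format, of 2] by auto
    have m3: "\<not> 3\<in>S \<or> \<not> Q (1\<in>S) (2\<in>S) False (4\<in>S)" using M[rule_format, of 3] by auto
    have m4: "\<not> 4\<in>S \<or> \<not> Q (1\<in>S) (2\<in>S) (3\<in>S) False" using M[rule_format, of 4] by auto
    have "(if 1\<in>S then {1} else {}) \<union> (if 2\<in>S then {2} else {}) \<union> (if 3\<in>S then {3} else {}) \<union> (if 4\<in>S then {4::nat} else {}) \<in> R"
      by (rule assms(2)[OF q m1 m2 m3 m4])
    then show "S \<in> R" by (subst det4[OF s])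
  qed
qed

definition PG :: "bool \<Rightarrow> bool \<Rightarrow> bool \<Rightarrow> bool \<Rightarrow> bool" where
  "PG a b c d \<longleftrightarrow> a \<and> (b \<or> c \<or> d) \<or> b \<and> c"
definition P1 :: "bool \<Rightarrow> bool \<Rightarrow> bool \<Rightarrow> bool \<Rightarrow> bool" where
  "P1 a b c d \<longleftrightarrow> a \<and> b \<or> a \<and> c \<or> b \<and> c"
definition P2 :: "bool \<Rightarrow> bool \<Rightarrow> bool \<Rightarrow> bool \<Rightarrow> bool" where
  "P2 a b c d \<longleftrightarrow> a \<and> (b \<or> c \<or> d)"

lemma WG: "{S. S \<subseteq> {1,2,3,4::nat} \<and> PG (1\<in>S) (2\<in>S) (3\<in>S) (4\<in>S) \<and> (\<forall>i\<in>S. \<not> PG (1\<in>S-{i}) (2\<in>S-{i}) (3\<in>S-{i}) (4\<in>S-{i}))} = {{1,2},{1,3},{1,4},{2,3}}"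
  apply (rule filt)
   apply (auto simp: PG_def)[1]
  subgoal for a b c d by (cases a; cases b; cases c; cases d; simp add: PG_def doubleton_eq_iff)
  done
lemma W1: "{S. S \<subseteq> {1,2,3,4::nat} \<and> P1 (1\<in>S) (2\<in>S) (3\<in>S) (4\<in>S) \<and> (\<forall>i\<in>S. \<not> P1 (1\<in>S-{i}) (2\<in>S-{i}) (3\<in>S-{i}) (4\<in>S-{i}))} = {{1,2},{1,3},{2,3}}"
  apply (rule filt)
   apply (auto simp: P1_def)[1]
  subgoal for a b c d by (cases a; cases b; cases c; cases d; simp add: P1_def doubleton_eq_iff)
  done
lemma W2: "{S. S \<subseteq> {1,2,3,4::nat} \<and> P2 (1\<in>S) (2\<in>S) (3\<in>S) (4\<in>S) \<and> (\<forall>i\<in>S. \<not> P2 (1\<in>S-{i}) (2\<in>S-{i}) (3\<in>S-{i}) (4\<in>S-{i}))} = {{1,2},{1,3},{1,4}}"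
  apply (rule filt)
   apply (auto simp: P2_def)[1]
  subgoal for a b c d by (cases a; cases b; cases c; cases d; simp add: P2_def doubleton_eq_iff)
  done

lemma steps_card:
  assumes "(mwc_step n)\<^sup>*\<^sup>* a b"
  shows "a = b \<or> card (Wmin a) < card (Wmin b)"
  using assms
proof (induction rule: rtranclp_induct)
  case base then show ?case by simp
next
  case (step b c)
  then show ?case unfolding mwc_step_def by auto
qed

lemma step_covers:
  assumes "mwc_step n x G"
  shows "covers n G x"
proof -
  have xc: "x \<in> cwvg n" and Gc: "G \<in> cwvg n" and cd: "card (Wmin G) = card (Wmin x) + 1"
    using assms unfolding mwc_step_def by auto
  have le: "mwc_le n x G" unfolding mwc_le_def using xc Gc assms by auto
  have ne: "x \<noteq> G" using cd by auto
  have "\<not> (\<exists>z. z \<noteq> x \<and> z \<noteq> G \<and> mwc_le n x z \<and> mwc_le n z G)"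
  proof
    assume "\<exists>z. z \<noteq> x \<and> z \<noteq> G \<and> mwc_le n x z \<and> mwc_le n z G"
    then obtain z where z: "z \<noteq> x" "z \<noteq> G" "mwc_le n x z" "mwc_le n z G" by blast
    have "card (Wmin x) < card (Wmin z)" using steps_card[of n x z] z unfolding mwc_le_def by auto
    moreover have "card (Wmin z) < card (Wmin G)" using steps_card[of n z G] z unfolding mwc_le_def by auto
    ultimately show False using cd by simp
  qed
  then show ?thesis unfolding covers_def using le ne by blast
qed

definition wG :: "nat \<Rightarrow> real" where
  "wG i = (if i = 1 then 3 else if i = 2 then 2 else if i = 3 then 2 else if i = 4 then 1 else 0)"
definition w1 :: "nat \<Rightarrow> real" where
  "w1 i = (if i = 1 \<or> i = 2 \<or> i = 3 then 1 else 0)"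
definition w2 :: "nat \<Rightarrow> real" where
  "w2 i = (if i = 1 then 3 else if i = 2 \<or> i = 3 \<or> i = 4 then 1 else 0)"

lemma fin_sub: "S \<subseteq> players n \<Longrightarrow> finite S"
  unfolding players_def using finite_subset by blast

lemma gG: "wg n wG 4 = {S. S \<subseteq> players n \<and> PG (1\<in>S) (2\<in>S) (3\<in>S) (4\<in>S)}"
proof (rule set_eqI)
  fix S
  show "S \<in> wg n wG 4 \<longleftrightarrow> S \<in> {S. S \<subseteq> players n \<and> PG (1\<in>S) (2\<in>S) (3\<in>S) (4\<in>S)}"
  proof (cases "S \<subseteq> players n")
    case True
    have "sum wG S = (if 1\<in>S then wG 1 else 0) + (if 2\<in>S then wG 2 else 0) + (if 3\<in>S then wG 3 else 0) + (if 4\<in>S then wG 4 else 0)"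
      by (rule sum4[OF fin_sub[OF True]]) (simp add: wG_def)
    then show ?thesis unfolding wg_def using True
      by (cases "1\<in>S"; cases "2\<in>S"; cases "3\<in>S"; cases "4\<in>S") (simp_all add: PG_def wG_def)
  qed (simp add: wg_def)
qed

lemma g1: "wg n w1 2 = {S. S \<subseteq> players n \<and> P1 (1\<in>S) (2\<in>S) (3\<in>S) (4\<in>S)}"
proof (rule set_eqI)
  fix S
  show "S \<in> wg n w1 2 \<longleftrightarrow> S \<in> {S. S \<subseteq> players n \<and> P1 (1\<in>S) (2\<in>S) (3\<in>S) (4\<in>S)}"
  proof (cases "S \<subseteq> players n")
    case True
    have "sum w1 S = (if 1\<in>S then w1 1 else 0) + (if 2\<in>S then w1 2 else 0) + (if 3\<in>S then w1 3 else 0) + (if 4\<in>S then w1 4 else 0)"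
      by (rule sum4[OF fin_sub[OF True]]) (simp add: w1_def)
    then show ?thesis unfolding wg_def using True
      by (cases "1\<in>S"; cases "2\<in>S"; cases "3\<in>S"; cases "4\<in>S") (simp_all add: P1_def w1_def)
  qed (simp add: wg_def)
qed

lemma g2: "wg n w2 4 = {S. S \<subseteq> players n \<and> P2 (1\<in>S) (2\<in>S) (3\<in>S) (4\<in>S)}"
proof (rule set_eqI)
  fix S
  show "S \<in> wg n w2 4 \<longleftrightarrow> S \<in> {S. S \<subseteq> players n \<and> P2 (1\<in>S) (2\<in>S) (3\<in>S) (4\<in>S)}"
  proof (cases "S \<subseteq> players n")
    case True
    have "sum w2 S = (if 1\<in>S then w2 1 else 0) + (if 2\<in>S then w2 2 else 0) + (if 3\<in>S then w2 3 else 0) + (if 4\<in>S then w2 4 else 0)"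
      by (rule sum4[OF fin_sub[OF True]]) (simp add: w2_def)
    then show ?thesis unfolding wg_def using True
      by (cases "1\<in>S"; cases "2\<in>S"; cases "3\<in>S"; cases "4\<in>S") (simp_all add: P2_def w2_def)
  qed (simp add: wg_def)
qed

lemma mG: assumes "n \<ge> 4" shows "Wmin (wg n wG 4) = {{1,2},{1,3},{1,4},{2,3}}"
proof -
  have "Wmin {S. S \<subseteq> players n \<and> PG (1\<in>S) (2\<in>S) (3\<in>S) (4\<in>S)} = {S. S \<subseteq> {1,2,3,4} \<and> PG (1\<in>S) (2\<in>S) (3\<in>S) (4\<in>S) \<and> (\<forall>i\<in>S. \<not> PG (1\<in>S-{i}) (2\<in>S-{i}) (3\<in>S-{i}) (4\<in>S-{i}))}"
    by (rule Wmin_char[where P="\<lambda>S. PG (1\<in>S) (2\<in>S) (3\<in>S) (4\<in>S)", OF assms]) auto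
  then show ?thesis unfolding gG using WG by (rule trans)
qed
lemma m1: assumes "n \<ge> 4" shows "Wmin (wg n w1 2) = {{1,2},{1,3},{2,3}}"
proof -
  have "Wmin {S. S \<subseteq> players n \<and> P1 (1\<in>S) (2\<in>S) (3\<in>S) (4\<in>S)} = {S. S \<subseteq> {1,2,3,4} \<and> P1 (1\<in>S) (2\<in>S) (3\<in>S) (4\<in>S) \<and> (\<forall>i\<in>S. \<not> P1 (1\<in>S-{i}) (2\<in>S-{i}) (3\<in>S-{i}) (4\<in>S-{i}))}"
    by (rule Wmin_char[where P="\<lambda>S. P1 (1\<in>S) (2\<in>S) (3\<in>S) (4\<in>S)", OF assms]) auto
  then show ?thesis unfolding g1 using W1 by (rule trans)
qed
lemma m2: assumes "n \<ge> 4" shows "Wmin (wg n w2 4) = {{1,2},{1,3},{1,4}}"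
proof -
  have "Wmin {S. S \<subseteq> players n \<and> P2 (1\<in>S) (2\<in>S) (3\<in>S) (4\<in>S)} = {S. S \<subseteq> {1,2,3,4} \<and> P2 (1\<in>S) (2\<in>S) (3\<in>S) (4\<in>S) \<and> (\<forall>i\<in>S. \<not> P2 (1\<in>S-{i}) (2\<in>S-{i}) (3\<in>S-{i}) (4\<in>S-{i}))}"
    by (rule Wmin_char[where P="\<lambda>S. P2 (1\<in>S) (2\<in>S) (3\<in>S) (4\<in>S)", OF assms]) auto
  then show ?thesis unfolding g2 using W2 by (rule trans)
qed

lemma cG: "wg n wG 4 \<in> cwvg n"
  by (rule wg_cwvg) (simp_all add: wG_def)
lemma c1: "wg n w1 2 \<in> cwvg n"
  by (rule wg_cwvg) (simp_all add: w1_def)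
lemma c2: "wg n w2 4 \<in> cwvg n"
  by (rule wg_cwvg) (simp_all add: w2_def)
lemma card4: "card {{1,2},{1,3},{1,4},{2,3::nat}} = 4"
  by (simp add: card_insert_if doubleton_eq_iff)
lemma card3a: "card {{1,2},{1,3},{2,3::nat}} = 3"
  by (simp add: card_insert_if doubleton_eq_iff)
lemma card3b: "card {{1,2},{1,3},{1,4::nat}} = 3"
  by (simp add: card_insert_if doubleton_eq_iff)
lemma ps1: "{{1,2},{1,3},{2,3::nat}} \<subset> {{1,2},{1,3},{1,4},{2,3::nat}}"
proof
  show "{{1,2},{1,3},{2,3::nat}} \<subseteq> {{1,2},{1,3},{1,4},{2,3::nat}}" by simp
  have a: "{1,4::nat} \<notin> {{1,2},{1,3},{2,3::nat}}" by (simp add: doubleton_eq_iff)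
  have b: "{1,4::nat} \<in> {{1,2},{1,3},{1,4},{2,3::nat}}" by simp
  show "{{1,2},{1,3},{2,3::nat}} \<noteq> {{1,2},{1,3},{1,4},{2,3::nat}}"
  proof
    assume e: "{{1,2},{1,3},{2,3::nat}} = {{1,2},{1,3},{1,4},{2,3::nat}}"
    have "{1,4::nat} \<in> {{1,2},{1,3},{2,3::nat}}" using b unfolding e[symmetric] .
    with a show False by (rule notE)
  qed
qed
lemma ps2: "{{1,2},{1,3},{1,4::nat}} \<subset> {{1,2},{1,3},{1,4},{2,3::nat}}"
proof
  show "{{1,2},{1,3},{1,4::nat}} \<subseteq> {{1,2},{1,3},{1,4},{2,3::nat}}" by simp
  have a: "{2,3::nat} \<notin> {{1,2},{1,3},{1,4::nat}}" by (simp add: doubleton_eq_iff)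
  have b: "{2,3::nat} \<in> {{1,2},{1,3},{1,4},{2,3::nat}}" by simp
  show "{{1,2},{1,3},{1,4::nat}} \<noteq> {{1,2},{1,3},{1,4},{2,3::nat}}"
  proof
    assume e: "{{1,2},{1,3},{1,4::nat}} = {{1,2},{1,3},{1,4},{2,3::nat}}"
    have "{2,3::nat} \<in> {{1,2},{1,3},{1,4::nat}}" using b unfolding e[symmetric] .
    with a show False by (rule notE)
  qed
qed

theorem proposition3:
  fixes n :: nat
  assumes "n \<ge> 4"
  shows "\<exists>G \<in> cwvg n. \<exists>x1 x2. x1 \<noteq> x2 \<and> covers n G x1 \<and> covers n G x2"
proof -
  have s1: "mwc_step n (wg n w1 2) (wg n wG 4)"
    unfolding mwc_step_def mG[OF assms] m1[OF assms] card4 card3a using cG c1 ps1 by simp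
  have s2: "mwc_step n (wg n w2 4) (wg n wG 4)"
    unfolding mwc_step_def mG[OF assms] m2[OF assms] card4 card3b using cG c2 ps2 by simp
  have ne: "wg n w1 2 \<noteq> wg n w2 4"
  proof
    assume "wg n w1 2 = wg n w2 4"
    then have "Wmin (wg n w1 2) = Wmin (wg n w2 4)" by simp
    then have "{{1,2},{1,3},{2,3}} = {{1,2},{1,3},{1,4::nat}}" unfolding m1[OF assms] m2[OF assms] .
    moreover have "{2,3::nat} \<in> {{1,2},{1,3},{2,3::nat}}" by simp
    ultimately have "{2,3::nat} \<in> {{1,2},{1,3},{1,4::nat}}" by metis
    then show False by (simp add: doubleton_eq_iff)
  qed
  show ?thesis using cG ne step_covers[OF s1] step_covers[OF s2] by blast
qed
end
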